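(* Let $T>0$ and $\epsilon>0$, and let $\mathcal{R}$ consist of $M$ independently generated random RR sets. For any node $u$ with $I_u\ge T$, with probability at least $1-\exp\!\left(-\frac{M\epsilon^2 n}{8T}\right)$ we have $n\,\mathcal{F_R}(u)\ge T-\frac{\epsilon n}{2}$.
   Context: $G=\langle V,E,w\rangle$ is a network with $n=|V|$ under the Linear Threshold or Independent Cascade model (given by its live-edge distribution: LT — each node $v$ independently selects at most one incoming live edge, $(u,v)$ with probability $w_{uv}/W_v$ where $W_v=w_v+\sum_{u}w_{uv}$ includes a self-weight $w_v$; IC — each edge $(u,v)$ is live independently with probability $w_{uv}$). The influence spread $I(S)$ is the expected number of nodes reachable from $S$ via live edges, and $I_u=I(\{u\})$. A random RR set is the set of nodes that can reach a uniformly random node $v\in V$ via live edges in a freshly sampled live-edge graph. $\mathcal{F_R}(u)$ is the fraction of RR sets in $\mathcal{R}$ that contain $u$. *)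

theory Defs
  imports "HOL-Probability.Probability"
begin

text \<open>Network: finite node set V, edge set E \<subseteq> V \<times> V, edge weights w (w u v = w_uv),
  self-weights ws (ws v = w_v, used by LT only). Live-edge graphs are edge sets.\<close>

definition reach :: "'a set \<Rightarrow> ('a \<times> 'a) set \<Rightarrow> 'a set \<Rightarrow> 'a set" where
  "reach V L S = {v \<in> V. \<exists>u\<in>S. (u, v) \<in> L\<^sup>*}"

definition IC_dist :: "('a \<times> 'a) set \<Rightarrow> ('a \<Rightarrow> 'a \<Rightarrow> real) \<Rightarrow> ('a \<times> 'a) set pmf" where
  "IC_dist E w = map_pmf (\<lambda>f. {e \<in> E. f e})
      (Pi_pmf E False (\<lambda>(u, v). bernoulli_pmf (w u v)))"

definition LT_W :: "('a \<times> 'a) set \<Rightarrow> ('a \<Rightarrow> 'a \<Rightarrow> real) \<Rightarrow> ('a \<Rightarrow> real) \<Rightarrow> 'a \<Rightarrow> real" where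
  "LT_W E w ws v = ws v + (\<Sum>u\<in>{u. (u, v) \<in> E}. w u v)"

text \<open>Choice of node v: Some u (incoming live edge (u,v)) w.p. w_uv / W_v, None w.p. w_v / W_v.\<close>
definition LT_choice :: "('a \<times> 'a) set \<Rightarrow> ('a \<Rightarrow> 'a \<Rightarrow> real) \<Rightarrow> ('a \<Rightarrow> real) \<Rightarrow> 'a \<Rightarrow> 'a option pmf" where
  "LT_choice E w ws v = embed_pmf (\<lambda>c. case c of
      None \<Rightarrow> ws v / LT_W E w ws v
    | Some u \<Rightarrow> (if (u, v) \<in> E then w u v / LT_W E w ws v else 0))"

definition LT_dist :: "'a set \<Rightarrow> ('a \<times> 'a) set \<Rightarrow> ('a \<Rightarrow> 'a \<Rightarrow> real) \<Rightarrow> ('a \<Rightarrow> real) \<Rightarrow> ('a \<times> 'a) set pmf" where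
  "LT_dist V E w ws = map_pmf (\<lambda>c. {(u, v). v \<in> V \<and> c v = Some u})
      (Pi_pmf V None (LT_choice E w ws))"

definition live_edge_model :: "'a set \<Rightarrow> ('a \<times> 'a) set \<Rightarrow> ('a \<Rightarrow> 'a \<Rightarrow> real) \<Rightarrow> ('a \<Rightarrow> real)
    \<Rightarrow> ('a \<times> 'a) set pmf \<Rightarrow> bool" where
  "live_edge_model V E w ws D \<longleftrightarrow>
     ((\<forall>(u, v)\<in>E. 0 \<le> w u v \<and> w u v \<le> 1) \<and> D = IC_dist E w) \<or>
     ((\<forall>(u, v)\<in>E. 0 \<le> w u v) \<and> (\<forall>v\<in>V. 0 \<le> ws v \<and> 0 < LT_W E w ws v) \<and> D = LT_dist V E w ws)"

definition influence :: "'a set \<Rightarrow> ('a \<times> 'a) set pmf \<Rightarrow> 'a set \<Rightarrow> real" where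
  "influence V D S = measure_pmf.expectation D (\<lambda>L. real (card (reach V L S)))"

definition RR_dist :: "'a set \<Rightarrow> ('a \<times> 'a) set pmf \<Rightarrow> 'a set pmf" where
  "RR_dist V D = do { v \<leftarrow> pmf_of_set V; L \<leftarrow> D; return_pmf {u \<in> V. (u, v) \<in> L\<^sup>*} }"

definition RR_collection :: "nat \<Rightarrow> 'a set \<Rightarrow> ('a \<times> 'a) set pmf \<Rightarrow> (nat \<Rightarrow> 'a set) pmf" where
  "RR_collection M V D = Pi_pmf {..<M} {} (\<lambda>_. RR_dist V D)"

definition frac_cover :: "nat \<Rightarrow> (nat \<Rightarrow> 'a set) \<Rightarrow> 'a \<Rightarrow> real" where
  "frac_cover M R u = real (card {i \<in> {..<M}. u \<in> R i}) / real M"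

end

theory Submission imports Defs begin
lemma measure_bind_pmf':
  "measure_pmf.prob (bind_pmf M N) X = measure_pmf.expectation M (\<lambda>x. measure_pmf.prob (N x) X)"
proof -
  have "emeasure (bind_pmf M N) X = (\<integral>\<^sup>+x. emeasure (N x) X \<partial>M)"
    by (rule emeasure_bind_pmf)
  also have "\<dots> = (\<integral>\<^sup>+x. ennreal (measure_pmf.prob (N x) X) \<partial>M)"
    by (simp add: measure_pmf.emeasure_eq_measure)
  also have "\<dots> = ennreal (measure_pmf.expectation M (\<lambda>x. measure_pmf.prob (N x) X))"
    by (rule nn_integral_eq_integral) (auto intro!: measure_pmf.integrable_const_bound[where B=1])
  finally show ?thesis
    by (simp add: measure_pmf.emeasure_eq_measure ennreal_inj integral_nonneg)
qed

lemma RR_prob: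
  assumes "finite V" "V \<noteq> {}" "u \<in> V"
  shows "measure_pmf.prob (RR_dist V D) {S. u \<in> S} = influence V D {u} / real (card V)"
proof -
  have inner: "measure_pmf.prob (D \<bind> (\<lambda>L. return_pmf {u \<in> V. (u, v) \<in> L\<^sup>*})) {S. u \<in> S}
      = measure_pmf.prob D {L. (u, v) \<in> L\<^sup>*}" for v
  proof -
    have "measure_pmf.prob (D \<bind> (\<lambda>L. return_pmf {u \<in> V. (u, v) \<in> L\<^sup>*})) {S. u \<in> S}
       = measure_pmf.expectation D (\<lambda>L. indicator {L. (u, v) \<in> L\<^sup>*} L)"
      using assms(3) by (simp only: measure_bind_pmf') (simp add: indicator_def)
    then show ?thesis by simp
  qed
  have "measure_pmf.prob (RR_dist V D) {S. u \<in> S}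
     = (\<Sum>v\<in>V. measure_pmf.prob D {L. (u, v) \<in> L\<^sup>*}) / real (card V)"
    unfolding RR_dist_def using assms
    by (subst measure_bind_pmf', simp only: inner) (simp add: integral_pmf_of_set)
  also have "(\<Sum>v\<in>V. measure_pmf.prob D {L. (u, v) \<in> L\<^sup>*})
      = (\<Sum>v\<in>V. measure_pmf.expectation D (\<lambda>L. indicator {L. (u, v) \<in> L\<^sup>*} L))"
    by simp
  also have "\<dots> = measure_pmf.expectation D (\<lambda>L. \<Sum>v\<in>V. indicator {L. (u, v) \<in> L\<^sup>*} L)"
    by (rule Bochner_Integration.integral_sum[symmetric])
       (auto intro!: measure_pmf.integrable_const_bound[where B=1])
  also have "(\<lambda>L. \<Sum>v\<in>V. indicator {L. (u, v) \<in> L\<^sup>*} L :: real) = (\<lambda>L. real (card (reach V L {u})))"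
    using assms(1) by (auto simp: reach_def indicator_def sum.If_cases Int_def intro!: ext)
  finally show ?thesis by (simp add: influence_def)
qed
lemma chernoff_aux:
  fixes Q :: "'b pmf" and A :: "'b set" and l c :: real
  assumes "l \<ge> 0"
  shows "measure_pmf.prob (Pi_pmf {..<M} dflt (\<lambda>_. Q)) {R. real (card {i\<in>{..<M}. R i \<in> A}) < c}
     \<le> exp (l * c) * (1 + (exp (-l) - 1) * measure_pmf.prob Q A) ^ M"
proof -
  let ?P = "Pi_pmf {..<M} dflt (\<lambda>_. Q)"
  let ?X = "\<lambda>R. real (card {i\<in>{..<M}. R i \<in> A})"
  let ?g = "\<lambda>x. exp (- l * (if x \<in> A then 1 else 0))"
  have X: "?X R = (\<Sum>i<M. (if R i \<in> A then 1 else 0))" for R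
    by (simp add: sum.If_cases Int_def)
  have G: "exp (-l * ?X R) = (\<Prod>i\<in>{..<M}. ?g (R i))" for R
    unfolding X by (simp add: sum_distrib_left exp_sum)
  have int1: "integrable (measure_pmf ?P) (\<lambda>R. \<Prod>i\<in>{..<M}. ?g (R i))"
    by (intro integrable_prod_Pi_pmf) (use assms in \<open>auto intro!: measure_pmf.integrable_const_bound[where B=1]\<close>)
  have "measure_pmf.prob ?P {R. ?X R < c} = measure_pmf.expectation ?P (indicator {R. ?X R < c})"
    by simp
  also have "\<dots> \<le> measure_pmf.expectation ?P (\<lambda>R. exp (l * c) * (\<Prod>i\<in>{..<M}. ?g (R i)))"
  proof (rule integral_mono)
    show "integrable (measure_pmf ?P) (indicator {R. ?X R < c} :: _ \<Rightarrow> real)"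
      by (rule measure_pmf.integrable_const_bound[where B=1]) auto
    show "integrable (measure_pmf ?P) (\<lambda>R. exp (l * c) * (\<Prod>i\<in>{..<M}. ?g (R i)))"
      using int1 by simp
    fix R
    show "indicator {R. ?X R < c} R \<le> exp (l * c) * (\<Prod>i\<in>{..<M}. ?g (R i))"
    proof (cases "?X R < c")
      case True
      have "l * ?X R \<le> l * c" using True assms by (intro mult_left_mono) auto
      hence "1 \<le> exp (l * c + (- l * ?X R))" by simp
      also have "\<dots> = exp (l * c) * exp (-l * ?X R)" by (simp only: exp_add mult_minus_left)
      finally show ?thesis using True G[of R] by simp
    next
      case False
      then show ?thesis by (simp add: prod_nonneg)
    qed
  qed
  also have "\<dots> = exp (l * c) * (\<Prod>i\<in>{..<M}. measure_pmf.expectation Q ?g)"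
    by (subst integral_mult_right_zero, subst expectation_prod_Pi_pmf)
       (use assms in \<open>auto intro!: measure_pmf.integrable_const_bound[where B=1]\<close>)
  also have "measure_pmf.expectation Q ?g = 1 + (exp (-l) - 1) * measure_pmf.prob Q A"
  proof -
    have "?g = (\<lambda>x. 1 + (exp (-l) - 1) * indicator A x)"
      by (auto simp: indicator_def fun_eq_iff)
    moreover have "measure_pmf.expectation Q (\<lambda>x. 1 + (exp (- l) - 1) * indicat_real A x) =
       measure_pmf.expectation Q (\<lambda>x. 1) + measure_pmf.expectation Q (\<lambda>x. (exp (- l) - 1) * indicat_real A x)"
      by (rule Bochner_Integration.integral_add) (auto intro!: integrable_mult_right measure_pmf.integrable_const_bound[where B=1] simp: indicator_def)
    ultimately show ?thesis by simp
  qed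
  finally show ?thesis by simp
qed

lemma exp_neg_quad: assumes "(l::real) \<ge> 0" shows "exp (-l) \<le> 1 - l + l^2/2"
proof -
  obtain t where "exp (-l) = (\<Sum>m<3. ((-l) ^ m) / fact m) + (exp t / fact 3) * (-l) ^ 3"
    using Maclaurin_exp_le[of "-l" 3] by blast
  moreover have "(\<Sum>m<3. ((-l) ^ m) / fact m) = 1 - l + l^2/2"
    by (simp add: numeral_3_eq_3 eval_nat_numeral)
  moreover have "(exp t / fact 3) * (-l) ^ 3 \<le> 0"
    using assms by (intro mult_nonneg_nonpos) (auto simp: power_odd_eq)
  ultimately show ?thesis by linarith
qed

lemma cmp_aux: "0 < (M::real) \<Longrightarrow> 0 < n \<Longrightarrow> (\<not> (n * (c / M) \<ge> T - e * n / 2)) \<longleftrightarrow> c < M * (T / n - e / 2)"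
proof -
  assume M: "0 < M" and n: "0 < n"
  have "n * (c / M) \<ge> T - e * n / 2 \<longleftrightarrow> n * c \<ge> M * (T - e * n / 2)"
    using M by (simp add: pos_le_divide_eq mult.commute mult.left_commute)
  also have "\<dots> \<longleftrightarrow> c \<ge> M * (T / n - e / 2)"
  proof -
    have "M * (T / n - e / 2) = (M * (T - e * n / 2)) / n" using n by (simp add: field_simps)
    then show ?thesis using n by (simp add: pos_divide_le_eq mult.commute)
  qed
  finally show ?thesis by linarith
qed

theorem lemma5p1:
  fixes V :: "'a set" and E :: "('a \<times> 'a) set" and w :: "'a \<Rightarrow> 'a \<Rightarrow> real"
    and ws :: "'a \<Rightarrow> real" and D :: "('a \<times> 'a) set pmf"
    and M :: nat and T \<epsilon> :: real and u :: 'a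
  assumes "finite V" and "V \<noteq> {}" and "E \<subseteq> V \<times> V"
    and "live_edge_model V E w ws D"
    and "T > 0" and "\<epsilon> > 0"
    and "u \<in> V" and "influence V D {u} \<ge> T"
  shows "measure_pmf.prob (RR_collection M V D)
           {R. real (card V) * frac_cover M R u \<ge> T - \<epsilon> * real (card V) / 2}
         \<ge> 1 - exp (- (real M * \<epsilon>^2 * real (card V)) / (8 * T))"
proof -
  define n where "n = real (card V)"
  have n0: "n > 0" using assms(1,2) by (simp add: n_def card_gt_0_iff)
  define q where "q = T / n"
  define \<theta> where "\<theta> = q - \<epsilon> / 2"
  define p where "p = measure_pmf.prob (RR_dist V D) {S. u \<in> S}"
  have q0: "q > 0" using n0 assms(5) by (simp add: q_def)
  have pq: "q \<le> p"
    using RR_prob[OF assms(1,2,7), of D] assms(8) n0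
    by (simp add: p_def q_def n_def divide_right_mono)
  have p1: "p \<le> 1" "0 \<le> p" by (simp_all add: p_def)
  let ?A = "{R. n * frac_cover M R u \<ge> T - \<epsilon> * n / 2}"
  let ?P = "RR_collection M V D"
  have fc0: "frac_cover M R u \<ge> 0" for R by (simp add: frac_cover_def)
  show ?thesis
  proof (cases "M = 0 \<or> \<theta> \<le> 0")
    case True
    show ?thesis
    proof (cases "M = 0")
      case True
      then show ?thesis by simp
    next
      case False
      with \<open>M = 0 \<or> \<theta> \<le> 0\<close> have "\<theta> \<le> 0" by simp
      hence "T - \<epsilon> * n / 2 \<le> 0" using n0
        by (simp add: \<theta>_def q_def field_simps)
      hence "?A = UNIV" using fc0 n0 by (auto intro!: order.trans[OF _ mult_nonneg_nonneg])
      then show ?thesis unfolding n_def by simp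
    qed
  next
    case False
    hence M0: "M > 0" and th0: "\<theta> > 0" by auto
    define l where "l = \<epsilon> / (2 * q)"
    have l0: "l \<ge> 0" using q0 assms(6) by (simp add: l_def)
    have l1: "l \<le> 1" using th0 q0 by (simp add: l_def \<theta>_def field_simps)
    have compl: "UNIV - ?A = {R. real (card {i\<in>{..<M}. R i \<in> {S. u \<in> S}}) < real M * \<theta>}"
    proof -
      have "\<not> (n * frac_cover M R u \<ge> T - \<epsilon> * n / 2) \<longleftrightarrow>
            real (card {i\<in>{..<M}. R i \<in> {S. u \<in> S}}) < real M * \<theta>" for R
      proof -
        have "{i\<in>{..<M}. R i \<in> {S. u \<in> S}} = {i \<in> {..<M}. u \<in> R i}" by simp
        then show ?thesis
          using M0 n0 unfolding frac_cover_def \<theta>_def q_def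
          by (simp only:) (intro cmp_aux, auto)
      qed
      then show ?thesis by auto
    qed
    have "measure_pmf.prob ?P (UNIV - ?A)
        \<le> exp (l * (real M * \<theta>)) * (1 + (exp (-l) - 1) * p) ^ M"
      unfolding compl RR_collection_def p_def by (rule chernoff_aux[OF l0])
    also have "(1 + (exp (-l) - 1) * p) ^ M \<le> exp ((exp (-l) - 1) * p) ^ M"
    proof (rule power_mono)
      show "1 + (exp (-l) - 1) * p \<le> exp ((exp (-l) - 1) * p)" by (rule exp_ge_add_one_self)
      have a1: "-1 \<le> exp (-l) - 1" by simp
      have a0: "exp (-l) - 1 \<le> 0" using l0 by simp
      have "(exp (-l) - 1) \<le> (exp (-l) - 1) * p" using mult_left_mono_neg[OF p1(1) a0] by simp
      hence "-1 \<le> (exp (-l) - 1) * p" using a1 by linarith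
      then show "0 \<le> 1 + (exp (-l) - 1) * p" by simp
    qed
    also have "exp ((exp (-l) - 1) * p) ^ M = exp (real M * ((exp (-l) - 1) * p))"
      by (simp add: exp_of_nat_mult)
    finally have b0: "measure_pmf.prob ?P (UNIV - ?A)
        \<le> exp (l * (real M * \<theta>)) * exp (real M * ((exp (-l) - 1) * p))"
      by (simp add: mult_left_mono)
    have "exp (l * (real M * \<theta>)) * exp (real M * ((exp (-l) - 1) * p))
        = exp (l * (real M * \<theta>) + real M * ((exp (-l) - 1) * p))"
      by (rule mult_exp_exp)
    also have "l * (real M * \<theta>) + real M * ((exp (-l) - 1) * p) = real M * (l * \<theta> + (exp (-l) - 1) * p)"
      by (simp add: distrib_left)
    finally have b1: "measure_pmf.prob ?P (UNIV - ?A)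
        \<le> exp (real M * (l * \<theta> + (exp (-l) - 1) * p))"
      using b0 by simp
    have "(exp (-l) - 1) * p \<le> (-l + l^2/2) * p"
      using exp_neg_quad[OF l0] p1 by (intro mult_right_mono) auto
    also have "\<dots> \<le> (-l + l^2/2) * q"
    proof (rule mult_left_mono_neg[OF pq])
      have "l^2 \<le> l" using l0 l1 by (simp add: power2_eq_square mult_left_le)
      then show "-l + l^2/2 \<le> 0" using l0 by simp
    qed
    finally have "l * \<theta> + (exp (-l) - 1) * p \<le> l * \<theta> + (-l + l^2/2) * q" by simp
    also have "\<dots> = - (\<epsilon>^2 / (8 * q))"
      using q0 by (simp add: l_def \<theta>_def field_simps power2_eq_square)
    finally have "real M * (l * \<theta> + (exp (-l) - 1) * p) \<le> real M * (- (\<epsilon>^2 / (8 * q)))"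
      by (intro mult_left_mono) auto
    also have "\<dots> = - (real M * \<epsilon>^2 * n) / (8 * T)"
      using n0 assms(5) by (simp add: q_def field_simps)
    finally have "measure_pmf.prob ?P (UNIV - ?A) \<le> exp (- (real M * \<epsilon>^2 * n) / (8 * T))"
      using b1 by (meson exp_le_cancel_iff order.trans)
    moreover have "measure_pmf.prob ?P (UNIV - ?A) = 1 - measure_pmf.prob ?P ?A"
      using measure_pmf.prob_compl[of ?A ?P] by simp
    ultimately show ?thesis unfolding n_def by simp
  qed
qed

end
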